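(* Let $s\in(0,1/2]$. For all $a,\ell\in\mathbb N$ with $2s\ell>1$, \[\sum_{M=1}^{\infty}\prod_{i=0}^{\ell}\frac{1}{(a+iM)^{2s}}\le\frac{1}{a^{2s\ell-1}}\cdot\frac{2s\ell}{2s\ell-1}.\] *)

theory Defs
  imports "HOL-Analysis.Analysis"
begin

end

theory Submission
  imports Defs
begin

lemma tele_step:
  fixes x p :: real
  assumes "1 \<le> x" "1 < p"
  shows "(x + 1) powr (- p) \<le> (x powr (1 - p) - (x + 1) powr (1 - p)) / (p - 1)"
proof -
  have "\<And>y. x \<le> y \<Longrightarrow> y \<le> x + 1 \<Longrightarrow>
      ((\<lambda>y. y powr (1 - p)) has_real_derivative (1 - p) * y powr (1 - p - 1)) (at y)"
    using assms by (intro has_real_derivative_powr) auto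
  from MVT2[of x "x+1", OF _ this]
  obtain z where z: "x < z" "z < x + 1"
    "(x + 1) powr (1 - p) - x powr (1 - p) = (x + 1 - x) * ((1 - p) * z powr (1 - p - 1))"
    by auto
  have eq: "x powr (1 - p) - (x + 1) powr (1 - p) = (p - 1) * z powr (- p)"
    using z(3) by (simp add: algebra_simps)
  have "(x + 1) powr (- p) \<le> z powr (- p)"
    using z assms by (intro powr_mono2') auto
  then have "(p - 1) * (x + 1) powr (- p) \<le> (p - 1) * z powr (- p)"
    using assms by (intro mult_left_mono) auto
  then show ?thesis using eq assms by (simp add: pos_le_divide_eq mult.commute)
qed

theorem lemma2p2:
  fixes s :: real and a l :: nat
  assumes "0 < s" and "s \<le> 1/2"
    and "1 \<le> a"
    and "2 * s * real l > 1"
  shows "summable (\<lambda>M::nat. \<Prod>i\<in>{0..l}. 1 / (real a + real i * real (M + 1)) powr (2 * s)) \<and>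
    (\<Sum>M::nat. \<Prod>i\<in>{0..l}. 1 / (real a + real i * real (M + 1)) powr (2 * s))
        \<le> 1 / real a powr (2 * s * real l - 1) * (2 * s * real l / (2 * s * real l - 1))"
proof -
  define t where "t = 2 * s"
  define p where "p = t * real l"
  have t0: "0 < t" using assms t_def by auto
  have p1: "1 < p" using assms unfolding p_def t_def by auto
  have a1: "1 \<le> real a" using assms by auto
  define f where "f = (\<lambda>M::nat. \<Prod>i\<in>{0..l}. 1 / (real a + real i * real (M + 1)) powr (2 * s))"
  define g where "g = (\<lambda>M::nat. ((real a + real M) powr (1 - p) - (real a + real M + 1) powr (1 - p)) / (p - 1))"
  have gs: "g sums (real a powr (1 - p) / (p - 1))"
  proof -
    have lim: "(\<lambda>n. (real a + real n) powr (1 - p)) \<longlonglongrightarrow> 0"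
      using p1 by (intro tendsto_neg_powr filterlim_tendsto_add_at_top[OF tendsto_const]
          filterlim_real_sequentially) auto
    have "(\<lambda>n. (real a + real n) powr (1 - p) - (real a + real (Suc n)) powr (1 - p))
        sums (real a powr (1 - p) - 0)"
      using telescope_sums'[OF lim] by simp
    from sums_divide[OF this, of "p - 1"]
    have "(\<lambda>n. ((real a + real n) powr (1 - p) - (real a + real (Suc n)) powr (1 - p)) / (p - 1))
        sums (real a powr (1 - p) / (p - 1))" by simp
    moreover have "(\<lambda>n. ((real a + real n) powr (1 - p) - (real a + real (Suc n)) powr (1 - p)) / (p - 1)) = g"
      unfolding g_def by (rule ext) (metis add.assoc add.commute of_nat_Suc)
    ultimately show ?thesis by simp
  qed
  have f0: "0 \<le> f M" for M unfolding f_def by (intro prod_nonneg) auto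
  have fg: "f M \<le> g M" for M
  proof -
    define h where "h = (\<lambda>i::nat. if i = 0 then 1 else (real a + real M + 1) powr (- t))"
    have "f M \<le> prod h {0..l}"
      unfolding f_def
    proof (intro prod_mono conjI)
      fix i assume "i \<in> {0..l}"
      show "0 \<le> 1 / (real a + real i * real (M + 1)) powr (2 * s)" by simp
      show "1 / (real a + real i * real (M + 1)) powr (2 * s) \<le> h i"
      proof (cases "i = 0")
        case True
        then show ?thesis using a1 t0 t_def h_def by (simp add: ge_one_powr_ge_zero)
      next
        case False
        then have "1 * real (M + 1) \<le> real i * real (M + 1)"
          by (intro mult_right_mono) auto
        then have "real a + real M + 1 \<le> real a + real i * real (M + 1)"
          by (simp only: mult_1_left of_nat_add of_nat_1)
        then have "(real a + real i * real (M + 1)) powr (- t) \<le> (real a + real M + 1) powr (- t)"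
          using t0 a1 by (intro powr_mono2') auto
        then show ?thesis using False h_def t_def by (simp add: powr_minus divide_inverse)
      qed
    qed
    also have "prod h {0..l} = ((real a + real M + 1) powr (- t)) ^ l"
    proof -
      have "prod h {0..l} = h 0 * prod h {1..l}"
        by (simp add: prod.atLeast_Suc_atMost)
      also have "prod h {1..l} = ((real a + real M + 1) powr (- t)) ^ l"
        by (simp add: h_def)
      finally show ?thesis by (simp add: h_def)
    qed
    also have "\<dots> = (real a + real M + 1) powr (- p)"
      using a1 by (simp add: p_def powr_realpow[symmetric] powr_powr)
    also have "\<dots> \<le> g M"
      unfolding g_def using tele_step[of "real a + real M" p] a1 p1 by simp
    finally show ?thesis .
  qed
  have sf: "summable f"
    using summable_comparison_test[of f g] gs f0 fg by (auto simp: sums_iff)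
  have "suminf f \<le> suminf g" using sf gs fg by (intro suminf_le) (auto simp: sums_iff)
  also have "\<dots> = real a powr (1 - p) / (p - 1)" using gs by (simp add: sums_iff)
  also have "\<dots> \<le> real a powr (1 - p) * (p / (p - 1))"
  proof -
    have "1 / (p - 1) \<le> p / (p - 1)" using p1 by (intro divide_right_mono) auto
    from mult_left_mono[OF this, of "real a powr (1 - p)"] show ?thesis by simp
  qed
  also have "real a powr (1 - p) = 1 / real a powr (p - 1)"
    using a1 by (simp add: powr_minus_divide[symmetric])
  finally show ?thesis using sf unfolding f_def p_def t_def by simp
qed

end
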